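(* Let $G$ be a connected bipartite graph with bipartition $(U,V)$, $|U|\ge|V|$. Let $V_W\subseteq V$ be the set of vertices of $V$ adjacent to a leaf, $\overline{V_W}=V\setminus V_W$, $U_L\subseteq U$ a set of leaves such that each $v\in V_W$ is adjacent to exactly one element of $U_L$ and $|U_L|=|V_W|$, and $\overline{U_L}=U\setminus U_L$. For $S\subseteq\overline{U_L}$ and $j\ge1$ let $g_j(S)$ be the number of independent sets $\mathcal C$ of $G$ with $|\mathcal C|=j$ and $\mathcal C\cap\overline{U_L}=S$, and $g(S)=\sum_{j=1}^{\alpha(G)}(-1)^{j-1}g_j(S)$. Suppose $\overline{V_W}\neq\emptyset$. Then $g(\emptyset)=1$, and for nonempty $S\subseteq \overline{U_L}$, $g(S)=(-1)^{|S|+|V_W|+1}$ if $N(S)=\overline{V_W}$ and $g(S)=0$ otherwise.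
   Context: A leaf is a vertex with exactly one neighbor. $N(S)$ is the set of vertices adjacent to some vertex of $S$. An independent set is a set of pairwise non-adjacent vertices; $\alpha(G)$ is the maximum size of one. *)

theory Defs
  imports Main
begin

definition simple_graph :: "'a set \<Rightarrow> ('a \<Rightarrow> 'a \<Rightarrow> bool) \<Rightarrow> bool" where
  "simple_graph Vs E \<longleftrightarrow> finite Vs \<and> (\<forall>x y. E x y \<longrightarrow> x \<in> Vs \<and> y \<in> Vs)
     \<and> (\<forall>x y. E x y \<longrightarrow> E y x) \<and> (\<forall>x. \<not> E x x)"

definition connected_graph :: "'a set \<Rightarrow> ('a \<Rightarrow> 'a \<Rightarrow> bool) \<Rightarrow> bool" where
  "connected_graph Vs E \<longleftrightarrow> Vs \<noteq> {} \<and> (\<forall>x\<in>Vs. \<forall>y\<in>Vs. E\<^sup>*\<^sup>* x y)"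

definition bipartition :: "'a set \<Rightarrow> ('a \<Rightarrow> 'a \<Rightarrow> bool) \<Rightarrow> 'a set \<Rightarrow> 'a set \<Rightarrow> bool" where
  "bipartition Vs E U V \<longleftrightarrow> U \<union> V = Vs \<and> U \<inter> V = {}
     \<and> (\<forall>x y. E x y \<longrightarrow> (x \<in> U \<and> y \<in> V) \<or> (x \<in> V \<and> y \<in> U))"

definition nbrs :: "'a set \<Rightarrow> ('a \<Rightarrow> 'a \<Rightarrow> bool) \<Rightarrow> 'a \<Rightarrow> 'a set" where
  "nbrs Vs E v = {w \<in> Vs. E v w}"

definition leaf :: "'a set \<Rightarrow> ('a \<Rightarrow> 'a \<Rightarrow> bool) \<Rightarrow> 'a \<Rightarrow> bool" where
  "leaf Vs E v \<longleftrightarrow> v \<in> Vs \<and> card (nbrs Vs E v) = 1"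

definition nbhd :: "'a set \<Rightarrow> ('a \<Rightarrow> 'a \<Rightarrow> bool) \<Rightarrow> 'a set \<Rightarrow> 'a set" where
  "nbhd Vs E S = {w \<in> Vs. \<exists>s\<in>S. E s w}"

definition indep_set :: "'a set \<Rightarrow> ('a \<Rightarrow> 'a \<Rightarrow> bool) \<Rightarrow> 'a set \<Rightarrow> bool" where
  "indep_set Vs E C \<longleftrightarrow> C \<subseteq> Vs \<and> (\<forall>x\<in>C. \<forall>y\<in>C. \<not> E x y)"

definition indep_number :: "'a set \<Rightarrow> ('a \<Rightarrow> 'a \<Rightarrow> bool) \<Rightarrow> nat" where
  "indep_number Vs E = Max (card ` {C. indep_set Vs E C})"

definition gj :: "'a set \<Rightarrow> ('a \<Rightarrow> 'a \<Rightarrow> bool) \<Rightarrow> 'a set \<Rightarrow> nat \<Rightarrow> 'a set \<Rightarrow> nat" where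
  "gj Vs E Ubar j S = card {C. indep_set Vs E C \<and> card C = j \<and> C \<inter> Ubar = S}"

definition gfun :: "'a set \<Rightarrow> ('a \<Rightarrow> 'a \<Rightarrow> bool) \<Rightarrow> 'a set \<Rightarrow> 'a set \<Rightarrow> int" where
  "gfun Vs E Ubar S = (\<Sum>j=1..indep_number Vs E. (-1) ^ (j - 1) * int (gj Vs E Ubar j S))"

end

theory Submission imports Defs begin

definition indf :: "('a \<Rightarrow> 'a \<Rightarrow> bool) \<Rightarrow> 'a set \<Rightarrow> 'a set set" where
 "indf E X = {D. D \<subseteq> X \<and> (\<forall>x\<in>D. \<forall>y\<in>D. \<not> E x y)}"
definition ipX :: "('a \<Rightarrow> 'a \<Rightarrow> bool) \<Rightarrow> 'a set \<Rightarrow> int" where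
 "ipX E X = (\<Sum>D\<in>indf E X. (-1::int) ^ card D)"

lemma indf_finite: "finite X \<Longrightarrow> finite (indf E X)"
  by (rule finite_subset[of _ "Pow X"]) (auto simp: indf_def)

lemma ip_rec:
  assumes "finite X" "v \<in> X" "\<forall>x y. E x y \<longrightarrow> E y x" "\<forall>x. \<not> E x x"
  shows "ipX E X = ipX E (X - {v}) - ipX E (X - ({v} \<union> {w\<in>X. E v w}))"
proof -
  let ?Y = "X - ({v} \<union> {w\<in>X. E v w})"
  have eq: "{D\<in>indf E X. v \<notin> D} \<union> {D\<in>indf E X. v\<in>D} = indf E X" by auto
  have A: "{D\<in>indf E X. v \<notin> D} = indf E (X - {v})" by (auto simp: indf_def)
  have B: "{D\<in>indf E X. v\<in>D} = insert v ` indf E ?Y"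
  proof
    show "{D\<in>indf E X. v\<in>D} \<subseteq> insert v ` indf E ?Y"
    proof
      fix D assume "D \<in> {D\<in>indf E X. v\<in>D}"
      hence D: "D \<subseteq> X" "\<forall>x\<in>D. \<forall>y\<in>D. \<not>E x y" "v\<in>D" by (auto simp: indf_def)
      have "D - {v} \<in> indf E ?Y" using D unfolding indf_def by blast
      moreover have "D = insert v (D - {v})" using D by blast
      ultimately show "D \<in> insert v ` indf E ?Y" by blast
    qed
    show "insert v ` indf E ?Y \<subseteq> {D\<in>indf E X. v\<in>D}"
      using assms unfolding indf_def by auto
  qed
  have inj: "inj_on (insert v) (indf E ?Y)"
    by (rule inj_onI) (auto simp: indf_def)
  have fin: "finite (indf E X)" using assms(1) by (rule indf_finite)
  have "ipX E X = (\<Sum>D\<in>{D\<in>indf E X. v \<notin> D}. (-1::int) ^ card D) + (\<Sum>D\<in>{D\<in>indf E X. v\<in>D}. (-1) ^ card D)"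
    proof -
    have "finite {D\<in>indf E X. v \<notin> D}" "finite {D\<in>indf E X. v \<in> D}" using fin by auto
    from sum.union_disjoint[OF this, of "\<lambda>D. (-1::int) ^ card D"]
    show ?thesis unfolding ipX_def eq by blast
  qed
  also have "(\<Sum>D\<in>{D\<in>indf E X. v \<notin> D}. (-1::int) ^ card D) = ipX E (X - {v})"
    unfolding A ipX_def ..
  also have "(\<Sum>D\<in>{D\<in>indf E X. v\<in>D}. (-1::int) ^ card D) = (\<Sum>D\<in>indf E ?Y. (-1) ^ card (insert v D))"
    unfolding B by (rule sum.reindex[OF inj, unfolded comp_def])
  also have "\<dots> = (\<Sum>D\<in>indf E ?Y. - ((-1) ^ card D))"
  proof (rule sum.cong[OF refl])
    fix D assume "D \<in> indf E ?Y"
    hence "finite D" "v \<notin> D" using assms(1) finite_subset unfolding indf_def by auto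
    thus "(-1::int) ^ card (insert v D) = - ((-1) ^ card D)" by simp
  qed
  also have "\<dots> = - ipX E ?Y" unfolding ipX_def by (simp add: sum_negf)
  finally show ?thesis by simp
qed

lemma ip_iso:
  assumes "finite X" "v \<in> X" "\<forall>x y. E x y \<longrightarrow> E y x" "\<forall>x. \<not> E x x" "\<And>w. w \<in> X \<Longrightarrow> \<not> E v w"
  shows "ipX E X = 0"
proof -
  have "X - ({v} \<union> {w\<in>X. E v w}) = X - {v}" using assms(5) by auto
  thus ?thesis using ip_rec[OF assms(1-4)] by simp
qed

lemma gfun_alt:
  fixes Vs :: "'a set"
  assumes fin: "finite Vs"
  shows "gfun Vs E Ubar S = (if S = {} then 1 else 0) - (\<Sum>C\<in>{C. indep_set Vs E C \<and> C \<inter> Ubar = S}. (-1::int)^card C)"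
proof -
  define I where "I = {C. indep_set Vs E C \<and> C \<inter> Ubar = S}"
  define I' where "I' = I - {{}}"
  define f :: "'a set \<Rightarrow> int" where "f = (\<lambda>C. - ((-1::int) ^ card C))"
  define \<alpha> where "\<alpha> = indep_number Vs E"
  have finI: "finite I" unfolding I_def indep_set_def
    by (rule finite_subset[of _ "Pow Vs"]) (use fin in auto)
  have finI': "finite I'" using finI unfolding I'_def by auto
  have finC: "finite (card ` {C. indep_set Vs E C})"
    by (rule finite_imageI, rule finite_subset[of _ "Pow Vs"]) (use fin in \<open>auto simp: indep_set_def\<close>)
  have le: "card C \<le> \<alpha>" if "indep_set Vs E C" for C
    unfolding \<alpha>_def indep_number_def using that finC by (intro Max_ge) auto
  have cardpos: "card C \<ge> 1" if "C \<in> I'" for C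
  proof -
    have "finite C" using that fin unfolding I'_def I_def indep_set_def by (auto intro: finite_subset)
    thus ?thesis using that unfolding I'_def by (cases "card C") auto
  qed
  have img: "card ` I' \<subseteq> {1..\<alpha>}"
  proof (rule image_subsetI)
    fix C assume C: "C \<in> I'"
    hence "indep_set Vs E C" unfolding I'_def I_def by auto
    thus "card C \<in> {1..\<alpha>}" using le cardpos[OF C] by auto
  qed
  have 1: "(-1)^(j-1) * int (gj Vs E Ubar j S) = (\<Sum>C\<in>{C\<in>I'. card C = j}. f C)"
    if "j \<in> {1..\<alpha>}" for j
  proof -
    have j: "j \<ge> 1" using that by auto
    have eqs: "{C\<in>I'. card C = j} = {C. indep_set Vs E C \<and> card C = j \<and> C \<inter> Ubar = S}"
      unfolding I'_def I_def using j by auto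
    have "(\<Sum>C\<in>{C\<in>I'. card C = j}. f C) = (\<Sum>C\<in>{C\<in>I'. card C = j}. - ((-1::int) ^ j))"
      unfolding f_def by (rule sum.cong) auto
    also have "\<dots> = int (gj Vs E Ubar j S) * (- ((-1::int) ^ j))"
      unfolding gj_def eqs by simp
    also have "- ((-1::int) ^ j) = (-1)^(j-1)" using j
      by (cases j) auto
    finally show ?thesis by simp
  qed
  have "gfun Vs E Ubar S = (\<Sum>j\<in>{1..\<alpha>}. (\<Sum>C\<in>{C\<in>I'. card C = j}. f C))"
    unfolding gfun_def \<alpha>_def[symmetric] using 1 by (rule sum.cong[OF refl])
  also have "\<dots> = sum f I'"
    by (rule sum.group[OF finI' _ img]) simp
  also have "\<dots> = - (\<Sum>C\<in>I'. (-1::int)^card C)" unfolding f_def by (simp add: sum_negf)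
  also have "(\<Sum>C\<in>I'. (-1::int)^card C) = (\<Sum>C\<in>I. (-1::int)^card C) - (if S = {} then 1 else 0)"
  proof -
    have "{} \<in> I \<longleftrightarrow> S = {}" unfolding I_def indep_set_def by auto
    thus ?thesis unfolding I'_def using sum_diff1[OF finI, of "\<lambda>C. (-1::int)^card C" "{}"] by auto
  qed
  finally show ?thesis unfolding I_def by simp
qed

theorem lemma5p7:
  fixes Vs :: "'a set" and E :: "'a \<Rightarrow> 'a \<Rightarrow> bool" and U V UL VW :: "'a set"
  assumes "simple_graph Vs E"
    and "connected_graph Vs E"
    and "bipartition Vs E U V"
    and "card U \<ge> card V"
    and VW_def: "VW = {v \<in> V. \<exists>u. E v u \<and> leaf Vs E u}"
    and "UL \<subseteq> U"
    and "\<forall>u\<in>UL. leaf Vs E u"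
    and "\<forall>v\<in>VW. card {u \<in> UL. E v u} = 1"
    and "card UL = card VW"
    and "V - VW \<noteq> {}"
  shows "gfun Vs E (U - UL) {} = 1 \<and>
         (\<forall>S. S \<subseteq> U - UL \<longrightarrow> S \<noteq> {} \<longrightarrow>
           gfun Vs E (U - UL) S =
             (if nbhd Vs E S = V - VW then (-1) ^ (card S + card VW + 1) else 0))"
proof -
  have fin: "finite Vs" and edge: "\<And>x y. E x y \<Longrightarrow> x \<in> Vs \<and> y \<in> Vs"
    and sym: "\<And>x y. E x y \<Longrightarrow> E y x" and irr: "\<And>x. \<not> E x x"
    using assms(1) unfolding simple_graph_def by auto
  have symA: "\<forall>x y. E x y \<longrightarrow> E y x" and irrA: "\<forall>x. \<not> E x x"
    using assms(1) unfolding simple_graph_def by auto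
  have UV: "U \<union> V = Vs" "U \<inter> V = {}"
    and bip: "\<And>x y. E x y \<Longrightarrow> (x \<in> U \<and> y \<in> V) \<or> (x \<in> V \<and> y \<in> U)"
    using assms(3) unfolding bipartition_def by auto
  have ULU: "UL \<subseteq> U" and ULleaf: "\<And>u. u \<in> UL \<Longrightarrow> leaf Vs E u"
    and VWc: "\<And>v. v \<in> VW \<Longrightarrow> card {u \<in> UL. E v u} = 1"
    using assms by auto
  have VWV: "VW \<subseteq> V" unfolding VW_def by auto
  have leaf_uniq: "a = b" if "leaf Vs E u" "E u a" "E u b" for u a b
  proof -
    from that(1) have "card (nbrs Vs E u) = 1" unfolding leaf_def by auto
    then obtain c where c: "nbrs Vs E u = {c}" by (rule card_1_singletonE)
    have "a \<in> nbrs Vs E u" "b \<in> nbrs Vs E u" using that edge unfolding nbrs_def by auto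
    thus ?thesis using c by auto
  qed
  have leaf_ex: "\<exists>w. E u w" if "leaf Vs E u" for u
  proof -
    from that have "card (nbrs Vs E u) = 1" unfolding leaf_def by auto
    then obtain c where c: "nbrs Vs E u = {c}" by (rule card_1_singletonE)
    thus ?thesis unfolding nbrs_def by auto
  qed
  define g where "g v = (THE u. u \<in> UL \<and> E v u)" for v
  have g: "g v \<in> UL \<and> E v (g v)" and guniq: "\<And>u. u \<in> UL \<Longrightarrow> E v u \<Longrightarrow> u = g v"
    if "v \<in> VW" for v
  proof -
    have "card {u \<in> UL. E v u} = 1" using VWc that by blast
    then obtain c where c: "{u \<in> UL. E v u} = {c}" by (rule card_1_singletonE)
    have "g v = c" unfolding g_def by (rule the_equality) (use c in auto)
    thus "g v \<in> UL \<and> E v (g v)" using c by auto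
    show "\<And>u. u \<in> UL \<Longrightarrow> E v u \<Longrightarrow> u = g v" using c \<open>g v = c\<close> by auto
  qed
  have ULnb: "w \<in> VW \<and> g w = u" if "u \<in> UL" "E u w" for u w
  proof -
    have "u \<in> U" using that ULU by auto
    hence "w \<in> V" using bip[OF that(2)] UV by auto
    moreover have "E w u" using sym[OF that(2)] .
    ultimately have "w \<in> VW" unfolding VW_def using ULleaf[OF that(1)] by auto
    thus ?thesis using guniq[OF _ that(1) \<open>E w u\<close>] by auto
  qed
  have ginj: "inj_on g VW"
  proof (rule inj_onI)
    fix v1 v2 assume v: "v1 \<in> VW" "v2 \<in> VW" "g v1 = g v2"
    have "E (g v1) v1" "E (g v1) v2" using sym[of v1 "g v1"] sym[of v2 "g v2"] g[OF v(1)] g[OF v(2)] v(3) by auto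
    thus "v1 = v2" using leaf_uniq ULleaf g[OF v(1)] by blast
  qed
  have ULimg: "UL = g ` VW"
  proof
    show "g ` VW \<subseteq> UL" using g by auto
    show "UL \<subseteq> g ` VW"
    proof
      fix u assume u: "u \<in> UL"
      then obtain w where "E u w" using leaf_ex ULleaf by blast
      thus "u \<in> g ` VW" using ULnb[OF u] by force
    qed
  qed
  have finVW: "finite VW" using VWV UV fin by (auto intro: finite_subset)
  have pair: "ipX E (K \<union> g ` K) = (-1)^card K" if "K \<subseteq> VW" for K
  proof -
    have "finite K" using that finVW by (auto intro: finite_subset)
    thus ?thesis using that
    proof (induction K rule: finite_subset_induct')
      case empty
      have "indf E ({} \<union> g ` {}) = {{}}" unfolding indf_def by auto
      thus ?case unfolding ipX_def by simp
    next
      case (insert v K)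
      define X where "X = insert v K \<union> g ` insert v K"
      have finX: "finite X" unfolding X_def using insert by auto
      have vX: "v \<in> X" unfolding X_def by auto
      have KV: "K \<subseteq> V" using insert VWV by auto
      have gU: "g ` insert v K \<subseteq> U" using g insert ULU by blast
      have vV: "v \<in> V" using insert VWV by auto
      have nb: "{w\<in>X. E v w} = {g v}"
      proof
        show "{g v} \<subseteq> {w\<in>X. E v w}" using g[OF insert(2)] unfolding X_def by auto
        show "{w\<in>X. E v w} \<subseteq> {g v}"
        proof
          fix w assume w: "w \<in> {w\<in>X. E v w}"
          hence "w \<in> U" using bip[of v w] vV UV by auto
          hence "w \<in> g ` insert v K" using w KV vV UV unfolding X_def by auto
          then obtain k where k: "k \<in> insert v K" "w = g k" by auto
          have "k \<in> VW" using k insert by auto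
          have "E w v" using w sym[of v w] by auto
          hence "g v = w" using ULnb[of w v] g[OF \<open>k \<in> VW\<close>] k by auto
          thus "w \<in> {g v}" by auto
        qed
      qed
      have gvU: "g v \<in> U" using gU by auto
      have gvK: "g v \<notin> g ` K"
        using ginj insert by (auto simp: inj_on_def)
      have e1: "X - ({v} \<union> {w\<in>X. E v w}) = K \<union> g ` K"
      proof -
        have "X - ({v} \<union> {w\<in>X. E v w}) = X - {v, g v}" using nb by auto
        also have "\<dots> = K \<union> g ` K" unfolding X_def using insert(4) gvK gvU KV vV gU UV by auto
        finally show ?thesis .
      qed
      have e2: "X - {v} = insert (g v) (K \<union> g ` K)"
        unfolding X_def using insert(4) gU vV UV by auto
      have iso: "ipX E (X - {v}) = 0"
      proof (rule ip_iso[of _ "g v"])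
        show "finite (X - {v})" using finX by auto
        show "g v \<in> X - {v}" unfolding e2 by auto
        show "\<forall>x y. E x y \<longrightarrow> E y x" by (rule symA)
        show "\<forall>x. \<not> E x x" by (rule irrA)
        fix w assume w: "w \<in> X - {v}"
        show "\<not> E (g v) w"
        proof
          assume "E (g v) w"
          hence "w \<in> VW \<and> g w = g v" using ULnb g[OF insert(2)] by auto
          hence "w = v" using ginj insert(2) by (auto simp: inj_on_def)
          thus False using w by auto
        qed
      qed
      have "ipX E X = - ipX E (K \<union> g ` K)"
        using ip_rec[OF finX vX symA irrA] iso e1 by simp
      thus ?case using insert X_def by simp
    qed
  qed
  have nbV: "nbhd Vs E S \<subseteq> V" if "S \<subseteq> U" for S
  proof
    fix w assume "w \<in> nbhd Vs E S"
    then obtain s where "s \<in> S" "E s w" unfolding nbhd_def by auto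
    thus "w \<in> V" using bip[of s w] that UV by auto
  qed
  have key: "ipX E (UL \<union> (V - nbhd Vs E S)) = (if nbhd Vs E S = V - VW then (-1)^card VW else 0)"
    if S: "S \<subseteq> U - UL" for S
  proof -
    define X where "X = UL \<union> (V - nbhd Vs E S)"
    have finX: "finite X" unfolding X_def using fin UV ULU by (auto intro: finite_subset)
    show ?thesis
    proof (cases "nbhd Vs E S = V - VW")
      case True
      hence "V - nbhd Vs E S = VW" using VWV by auto
      hence "X = VW \<union> g ` VW" unfolding X_def using ULimg by auto
      thus ?thesis using pair[of VW] True X_def by simp
    next
      case False
      have "(\<exists>v \<in> V - VW. v \<notin> nbhd Vs E S) \<or> (\<exists>v \<in> VW. v \<in> nbhd Vs E S)"
        using False nbV[of S] S VWV by blast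
      hence "ipX E X = 0"
      proof
        assume "\<exists>v \<in> V - VW. v \<notin> nbhd Vs E S"
        then obtain v where v: "v \<in> V - VW" "v \<notin> nbhd Vs E S" by auto
        show ?thesis
        proof (rule ip_iso[OF finX, of v])
          show "v \<in> X" unfolding X_def using v by auto
          show "\<forall>x y. E x y \<longrightarrow> E y x" by (rule symA)
          show "\<forall>x. \<not> E x x" by (rule irrA)
          fix w assume w: "w \<in> X"
          show "\<not> E v w"
          proof
            assume "E v w"
            hence "w \<in> U" using bip[of v w] v UV by auto
            hence "w \<in> UL" using w UV unfolding X_def by auto
            thus False using ULnb[of w v] sym[OF \<open>E v w\<close>] v by auto
          qed
        qed
      next
        assume "\<exists>v \<in> VW. v \<in> nbhd Vs E S"
        then obtain v where v: "v \<in> VW" "v \<in> nbhd Vs E S" by auto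
        show ?thesis
        proof (rule ip_iso[OF finX, of "g v"])
          show "g v \<in> X" unfolding X_def using g[OF v(1)] by auto
          show "\<forall>x y. E x y \<longrightarrow> E y x" by (rule symA)
          show "\<forall>x. \<not> E x x" by (rule irrA)
          fix w assume w: "w \<in> X"
          show "\<not> E (g v) w"
          proof
            assume "E (g v) w"
            hence "w \<in> VW \<and> g w = g v" using ULnb g[OF v(1)] by auto
            hence "w = v" using ginj v(1) by (auto simp: inj_on_def)
            thus False using w v VWV ULU UV unfolding X_def by auto
          qed
        qed
      qed
      thus ?thesis using False X_def by simp
    qed
  qed
  have hS: "(\<Sum>C\<in>{C. indep_set Vs E C \<and> C \<inter> (U - UL) = S}. (-1::int)^card C)
      = (-1)^card S * ipX E (UL \<union> (V - nbhd Vs E S))"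
    if S: "S \<subseteq> U - UL" for S
  proof -
    define X where "X = UL \<union> (V - nbhd Vs E S)"
    have finS: "finite S" using S fin UV by (auto intro: finite_subset)
    have finX: "finite X" unfolding X_def using fin UV ULU by (auto intro: finite_subset)
    have img: "{C. indep_set Vs E C \<and> C \<inter> (U - UL) = S} = (\<lambda>D. S \<union> D) ` indf E X"
    proof
      show "{C. indep_set Vs E C \<and> C \<inter> (U - UL) = S} \<subseteq> (\<lambda>D. S \<union> D) ` indf E X"
      proof
        fix C assume "C \<in> {C. indep_set Vs E C \<and> C \<inter> (U - UL) = S}"
        hence C: "C \<subseteq> Vs" "\<forall>x\<in>C. \<forall>y\<in>C. \<not> E x y" "C \<inter> (U - UL) = S"
          unfolding indep_set_def by auto
        have "C - S \<subseteq> X"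
        proof
          fix x assume x: "x \<in> C - S"
          show "x \<in> X"
          proof (cases "x \<in> U")
            case True thus ?thesis using x C unfolding X_def by auto
          next
            case False
            hence "x \<in> V" using x C UV by auto
            moreover have "x \<notin> nbhd Vs E S" using x C unfolding nbhd_def by auto
            ultimately show ?thesis unfolding X_def by auto
          qed
        qed
        hence "C - S \<in> indf E X" using C unfolding indf_def by auto
        moreover have "C = S \<union> (C - S)" using C by auto
        ultimately show "C \<in> (\<lambda>D. S \<union> D) ` indf E X" by blast
      qed
      show "(\<lambda>D. S \<union> D) ` indf E X \<subseteq> {C. indep_set Vs E C \<and> C \<inter> (U - UL) = S}"
      proof
        fix C assume "C \<in> (\<lambda>D. S \<union> D) ` indf E X"
        then obtain D where D: "D \<subseteq> X" "\<forall>x\<in>D. \<forall>y\<in>D. \<not> E x y" and CD: "C = S \<union> D"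
          unfolding indf_def by auto
        have "C \<subseteq> Vs" using D S ULU UV unfolding CD X_def by auto
        moreover have "\<forall>x\<in>C. \<forall>y\<in>C. \<not> E x y"
        proof (intro ballI notI)
          fix x y assume x: "x \<in> C" and y: "y \<in> C" and e: "E x y"
          have noS: "\<not> E s d" if "s \<in> S" "d \<in> D" for s d
          proof
            assume "E s d"
            have "s \<in> U" using that S by auto
            hence "d \<in> V" using bip[OF \<open>E s d\<close>] UV by auto
            hence "d \<in> V - nbhd Vs E S" using D that ULU UV unfolding X_def by auto
            thus False using \<open>E s d\<close> that edge unfolding nbhd_def by auto
          qed
          show False
          proof (cases "x \<in> S")
            case True
            show False
            proof (cases "y \<in> S")
              case True
              thus False using \<open>x \<in> S\<close> S bip[OF e] UV by auto
            next
              case False thus False using y CD noS[of x y] \<open>x \<in> S\<close> e by auto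
            qed
          next
            case False
            hence xD: "x \<in> D" using x CD by auto
            show False
            proof (cases "y \<in> S")
              case True thus False using noS[of y x] xD sym[OF e] by auto
            next
              case False thus False using y CD D(2) xD e by auto
            qed
          qed
        qed
        moreover have "C \<inter> (U - UL) = S" using D S UV unfolding CD X_def by auto
        ultimately show "C \<in> {C. indep_set Vs E C \<and> C \<inter> (U - UL) = S}"
          unfolding indep_set_def by auto
      qed
    qed
    have disj: "S \<inter> D = {}" if "D \<in> indf E X" for D
      using that S UV ULU unfolding indf_def X_def by auto
    have inj: "inj_on (\<lambda>D. S \<union> D) (indf E X)"
    proof (rule inj_onI)
      fix D1 D2 assume "D1 \<in> indf E X" "D2 \<in> indf E X" "S \<union> D1 = S \<union> D2"
      thus "D1 = D2" using disj by blast
    qed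
    have "(\<Sum>C\<in>{C. indep_set Vs E C \<and> C \<inter> (U - UL) = S}. (-1::int)^card C)
        = (\<Sum>D\<in>indf E X. (-1::int)^card (S \<union> D))"
      unfolding img by (rule sum.reindex[OF inj, unfolded comp_def])
    also have "\<dots> = (\<Sum>D\<in>indf E X. (-1)^card S * (-1::int)^card D)"
    proof (rule sum.cong[OF refl])
      fix D assume D: "D \<in> indf E X"
      hence "finite D" using finX unfolding indf_def by (auto intro: finite_subset)
      hence "card (S \<union> D) = card S + card D" using card_Un_disjoint finS disj[OF D] by auto
      thus "(-1::int)^card (S \<union> D) = (-1)^card S * (-1::int)^card D" by (simp add: power_add)
    qed
    also have "\<dots> = (-1)^card S * ipX E X" unfolding ipX_def by (simp add: sum_distrib_left)
    finally show ?thesis unfolding X_def .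
  qed
  have gf: "gfun Vs E (U - UL) S = (if S = {} then 1 else 0) - (-1)^card S *
      (if nbhd Vs E S = V - VW then (-1)^card VW else 0)"
    if "S \<subseteq> U - UL" for S
    using gfun_alt[OF fin, of E "U - UL" S] hS[OF that] key[OF that] by simp
  have "nbhd Vs E {} \<noteq> V - VW" using assms(10) unfolding nbhd_def by auto
  hence g0: "gfun Vs E (U - UL) {} = 1" using gf[of "{}"] by simp
  show ?thesis
  proof (intro conjI allI impI)
    show "gfun Vs E (U - UL) {} = 1" by (rule g0)
    fix S assume "S \<subseteq> U - UL" "S \<noteq> {}"
    thus "gfun Vs E (U - UL) S =
             (if nbhd Vs E S = V - VW then (-1) ^ (card S + card VW + 1) else 0)"
      using gf[of S] by (simp add: power_add)
  qed
qed

end
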